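(* Let $A\in\mathbb{R}^{d\times d}$ be orthogonal and let $(w_t)_{t\in\mathbb{N}_0}$ be mutually independent $\mathbb{R}^d$-valued random vectors with $\mathsf{E}[w_t]=0$, $\mathsf{E}[w_tw_t^{\mathrm T}]=Q_t$, and $\mathsf{E}[\|w_t\|^4]\le C_4$ for all $t$, for some $C_4>0$. Consider the system $y_{t+1}=Ay_t+u_t+w_t$ with $y_t,u_t\in\mathbb{R}^d$. Then there exist a constant $r>0$ and a measurable map $f:\mathbb{R}^d\to\mathbb{R}^d$ with $\|f(y)\|\le r$ for all $y\in\mathbb{R}^d$ such that the closed-loop system $$y_{t+1}=Ay_t+f(y_t)+w_t,\qquad y_0=x,$$ satisfies $\sup_{t\in\mathbb{N}_0}\mathsf{E}_x[\|y_t\|^2]<\infty$ for every $x\in\mathbb{R}^d$.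
   Context: $\|\cdot\|$ is the Euclidean norm; $\mathsf{E}_x$ is expectation given the initial condition $x$. *)

theory Defs
  imports "HOL-Probability.Probability"
begin

primrec closed_loop ::
  "real^'n^'n \<Rightarrow> (real^'n \<Rightarrow> real^'n) \<Rightarrow> (nat \<Rightarrow> 'a \<Rightarrow> real^'n) \<Rightarrow> real^'n \<Rightarrow> nat \<Rightarrow> 'a \<Rightarrow> real^'n"
where
  "closed_loop A f w x 0 = (\<lambda>\<omega>. x)"
| "closed_loop A f w x (Suc t) =
     (\<lambda>\<omega>. A *v closed_loop A f w x t \<omega> + f (closed_loop A f w x t \<omega>) + w t \<omega>)"

end

theory Submission
  imports Defs
begin


lemma orth_norm: fixes A :: "real^'n^'n" assumes "orthogonal_matrix A" shows "norm (A *v y) = norm y"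
proof -
  have "orthogonal_transformation ((*v) A)"
    using assms by (simp add: orthogonal_transformation_matrix matrix_of_matrix_vector_mul)
  then show ?thesis by (rule orthogonal_transformation_norm)
qed

definition ctrl :: "real \<Rightarrow> real^'n^'n \<Rightarrow> real^'n \<Rightarrow> real^'n" where
  "ctrl a A y = - (min 1 (a / norm y)) *\<^sub>R (A *v y)"

lemma ctrl_norm: assumes "orthogonal_matrix A" "a > 0" shows "norm (ctrl a A y) \<le> a"
proof (cases "y = 0")
  case True then show ?thesis using assms by (simp add: ctrl_def)
next
  case False
  then have "norm (ctrl a A y) = min 1 (a / norm y) * norm y"
    using assms by (simp add: ctrl_def orth_norm)
  also have "\<dots> \<le> (a / norm y) * norm y" by (intro mult_right_mono) auto
  also have "\<dots> = a" using False by simp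
  finally show ?thesis .
qed

lemma g_norm: assumes "orthogonal_matrix A" "a > 0"
  shows "norm (A *v y + ctrl a A y) \<le> max 0 (norm y - a)"
proof -
  have eq: "A *v y + ctrl a A y = (1 - min 1 (a / norm y)) *\<^sub>R (A *v y)"
    by (simp add: ctrl_def algebra_simps)
  show ?thesis
  proof (cases "norm y \<le> a")
    case True
    then have "min 1 (a / norm y) = 1 \<or> y = 0" using assms
      by (cases "y = 0") (auto simp: min_def field_simps)
    then show ?thesis using eq by auto
  next
    case False
    then have "a / norm y < 1" using assms by (auto simp: divide_less_eq)
    then have "min 1 (a / norm y) = a / norm y" by (auto simp: min_def)
    then have "norm (A *v y + ctrl a A y) = (1 - a / norm y) * norm y"
      using eq assms False by (simp add: orth_norm)
    also have "\<dots> = norm y - a" using False assms by (auto simp: field_simps)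
    finally show ?thesis by simp
  qed
qed

lemma Amul_meas[measurable]: fixes A :: "real^'n^'m" shows "(*v) A \<in> borel_measurable borel"
  by (intro borel_measurable_continuous_onI) (rule linear_continuous_on[OF matrix_vector_mul_bounded_linear])

lemma ctrl_meas[measurable]: "ctrl a A \<in> borel_measurable borel"
proof -
  have "(\<lambda>y. A *v y) \<in> borel_measurable borel" by simp
  then show ?thesis unfolding ctrl_def by measurable
qed



lemma step_bound:
  fixes W :: "'a \<Rightarrow> real^'n" and v :: "real^'n"
  assumes P: "prob_space M" and Wm: "W \<in> borel_measurable M" and Wi: "integrable M W"
    and W0: "(\<integral>\<omega>. W \<omega> \<partial>M) = 0"
    and W4i: "integrable M (\<lambda>\<omega>. norm (W \<omega>)^4)" and W4: "(\<integral>\<omega>. norm (W \<omega>)^4 \<partial>M) \<le> C4"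
    and C4: "C4 > 0" and a: "a > 0" and n: "n \<ge> 1" and vs: "norm v \<le> s"
    and va: "norm v \<le> max 0 (s - a)"
  shows "(\<integral>\<^sup>+\<omega>. ennreal ((max 0 (norm (v + W \<omega>) - a * (real n - 1)))^2) \<partial>M)
     \<le> ennreal ((max 0 (s - a * real n))^2 + (16*C4/a^2 + 9*(1+C4) + 4*(1+C4)/a^2 * s^2) / (real n)^2)"
    (is "?L \<le> ennreal (?U + ?err)")
proof -
  interpret prob_space M by (rule P)
  define S where "S = 1 + C4"
  define c where "c = a * (real n - 1)"
  have c0: "c \<ge> 0" using a n by (simp add: c_def)
  have nr: "real n \<ge> 1" using n by simp
  have sq_le: "\<And>x::real. x^2 \<le> 1 + x^4"
  proof -
    fix x :: real
    have "0 \<le> (x^2 - 1/2)^2" by simp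
    moreover have "x^4 = (x^2)^2" by simp
    ultimately show "x^2 \<le> 1 + x^4" by (simp add: power2_eq_square algebra_simps)
  qed
  have W2i: "integrable M (\<lambda>\<omega>. norm (W \<omega>)^2)"
  proof (rule Bochner_Integration.integrable_bound[where f="\<lambda>\<omega>. 1 + norm (W \<omega>)^4"])
    show "integrable M (\<lambda>\<omega>. 1 + norm (W \<omega>)^4)" using W4i by simp
    show "(\<lambda>\<omega>. norm (W \<omega>)^2) \<in> borel_measurable M" using Wm by measurable
    show "AE x in M. norm (norm (W x)^2) \<le> norm (1 + norm (W x)^4)"
      using sq_le by (auto intro!: AE_I2)
  qed
  have W2: "(\<integral>\<omega>. norm (W \<omega>)^2 \<partial>M) \<le> S"
  proof -
    have "(\<integral>\<omega>. norm (W \<omega>)^2 \<partial>M) \<le> (\<integral>\<omega>. 1 + norm (W \<omega>)^4 \<partial>M)"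
      using W2i W4i sq_le by (intro integral_mono) auto
    also have "\<dots> = 1 + (\<integral>\<omega>. norm (W \<omega>)^4 \<partial>M)"
      using W4i by (simp add: prob_space)
    finally show ?thesis using W4 by (simp add: S_def)
  qed
  have S0: "S > 0" using C4 by (simp add: S_def)
  have errnn: "?err \<ge> 0" using a C4 by (intro divide_nonneg_nonneg add_nonneg_nonneg) auto
  have Unn: "?U \<ge> 0" by simp
  show ?thesis
  proof (cases "n \<ge> 4 \<and> s \<le> a * real n / 2")
    case True
    define d where "d = c - norm v"
    have a4: "a * 4 \<le> a * real n" using a True by simp
    have dge: "d \<ge> a * real n / 4"
    proof -
      have "d = a * real n - a - norm v" by (simp add: d_def c_def algebra_simps)
      then show ?thesis using a4 True vs by linarith
    qed
    have "a * real n \<ge> a" using a nr by simp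
    then have dpos: "d > 0" using dge a by linarith
    define k where "k = 16 / (a^2 * (real n)^2)"
    have dk: "1 / d^2 \<le> k"
    proof -
      have "(a * real n / 4)^2 \<le> d^2" using dge a nr by (intro power_mono) auto
      then have "a^2 * (real n)^2 / 16 \<le> d^2" by (simp add: power_mult_distrib power_divide)
      then show ?thesis unfolding k_def using a nr dpos
        by (simp add: field_simps)
    qed
    have pw: "(max 0 (norm (v + W \<omega>) - c))^2 \<le> k * norm (W \<omega>)^4" for \<omega>
    proof -
      let ?z = "norm (W \<omega>)"
      have tri: "norm (v + W \<omega>) \<le> norm v + ?z" by (rule norm_triangle_ineq)
      show ?thesis
      proof (cases "?z \<le> d")
        case True
        then have "max 0 (norm (v + W \<omega>) - c) = 0" using tri d_def by auto
        then show ?thesis using dk dpos by (simp add: k_def)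
      next
        case False
        have m: "max 0 (norm (v + W \<omega>) - c) \<le> ?z - d" using tri d_def False by auto
        have "(max 0 (norm (v + W \<omega>) - c))^2 \<le> (?z - d)^2" by (intro power_mono m) simp
        also have "\<dots> \<le> ?z^2" using False dpos by (intro power_mono) auto
        also have "\<dots> = ?z^4 * (1 / ?z^2)" using False dpos by (simp add: field_simps power4_eq_xxxx power2_eq_square)
        also have "\<dots> \<le> ?z^4 * (1 / d^2)"
        proof -
          have zd: "d^2 \<le> ?z^2" using False dpos by (intro power_mono) auto
          have pp: "0 < ?z^2 * d^2" using False dpos by (intro mult_pos_pos) auto
          have "1 / ?z^2 \<le> 1 / d^2" by (rule divide_left_mono[OF zd _ pp]) simp
          then show ?thesis by (intro mult_left_mono) auto
        qed
        also have "\<dots> \<le> ?z^4 * k" using dk by (intro mult_left_mono) auto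
        finally show ?thesis by (simp add: mult.commute)
      qed
    qed
    have "?L \<le> (\<integral>\<^sup>+\<omega>. ennreal (k * norm (W \<omega>)^4) \<partial>M)"
      using pw unfolding c_def by (intro nn_integral_mono ennreal_leI) auto
    also have "\<dots> = ennreal (\<integral>\<omega>. k * norm (W \<omega>)^4 \<partial>M)"
      using W4i k_def by (intro nn_integral_eq_integral) auto
    also have "\<dots> = ennreal (k * (\<integral>\<omega>. norm (W \<omega>)^4 \<partial>M))" by simp
    also have "\<dots> \<le> ennreal (k * C4)"
      using W4 k_def by (intro ennreal_leI mult_left_mono) auto
    also have "\<dots> \<le> ennreal (?U + ?err)"
    proof (intro ennreal_leI)
      have "k * C4 = 16*C4/a^2 / (real n)^2" by (simp add: k_def field_simps)
      also have "\<dots> \<le> ?err" using a C4 nr S0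
        by (intro divide_right_mono) (auto simp: S_def)
      finally show "k * C4 \<le> ?U + ?err" using Unn by linarith
    qed
    finally show ?thesis .
  next
    case notA: False
    have Serr: "S \<le> ?err"
    proof (cases "n < 4")
      case True
      then have "(real n)^2 \<le> 9"
      proof -
        have "real n \<le> 3" using True by simp
        then have "(real n)^2 \<le> 3^2" by (intro power_mono) auto
        then show ?thesis by simp
      qed
      then have "S \<le> 9 * S / (real n)^2" using S0 nr by (simp add: field_simps)
      also have "\<dots> \<le> ?err" using a C4 nr S0
        by (intro divide_right_mono) (auto simp: S_def)
      finally show ?thesis .
    next
      case False
      then have sgt: "s > a * real n / 2" using notA by auto
      have "(a * real n / 2)^2 \<le> s^2" using sgt a nr by (intro power_mono) auto
      then have "a^2 * (real n)^2 \<le> 4 * s^2" by (simp add: power_mult_distrib power_divide)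
      then have "S \<le> 4 * S / a^2 * s^2 / (real n)^2" using S0 a nr by (simp add: field_simps)
      also have "\<dots> \<le> ?err" using a C4 nr S0
        by (intro divide_right_mono) (auto simp: S_def)
      finally show ?thesis .
    qed
    show ?thesis
    proof (cases "norm v \<le> c")
      case True
      have pw: "(max 0 (norm (v + W \<omega>) - c))^2 \<le> norm (W \<omega>)^2" for \<omega>
      proof -
        have tri: "norm (v + W \<omega>) \<le> norm v + norm (W \<omega>)" by (rule norm_triangle_ineq)
        have "max 0 (norm (v + W \<omega>) - c) \<le> norm (W \<omega>)" using tri True by auto
        then show ?thesis by (intro power_mono) auto
      qed
      have "?L \<le> (\<integral>\<^sup>+\<omega>. ennreal (norm (W \<omega>)^2) \<partial>M)"
        using pw unfolding c_def by (intro nn_integral_mono ennreal_leI) auto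
      also have "\<dots> = ennreal (\<integral>\<omega>. norm (W \<omega>)^2 \<partial>M)"
        using W2i by (intro nn_integral_eq_integral) auto
      also have "\<dots> \<le> ennreal (?U + ?err)"
        using W2 Serr Unn by (intro ennreal_leI) linarith
      finally show ?thesis .
    next
      case False
      then have vpos: "norm v > 0" using c0 by linarith
      define e where "e = v /\<^sub>R norm v"
      have ne: "norm e = 1" using vpos by (simp add: e_def)
      have ev: "inner e v = norm v" using vpos by (simp add: e_def power2_norm_eq_inner[symmetric] power2_eq_square)
      define R where "R \<omega> = (norm v - c)^2 + norm (W \<omega>)^2 + 2 * inner (v - c *\<^sub>R e) (W \<omega>)" for \<omega>
      have pw: "(max 0 (norm (v + W \<omega>) - c))^2 \<le> R \<omega>" for \<omega>
      proof -
        let ?N = "norm (v + W \<omega>)"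
        have "(max 0 (?N - c))^2 \<le> (?N - c)^2"
          by (cases "?N \<le> c") (auto simp: max_def)
        also have "\<dots> = ?N^2 - 2*c*?N + c^2" by (simp add: power2_diff)
        also have "?N^2 = norm v^2 + 2 * inner v (W \<omega>) + norm (W \<omega>)^2"
          by (simp add: power2_norm_eq_inner inner_add_left inner_add_right inner_commute)
        also have "inner e (v + W \<omega>) \<le> ?N"
          using Cauchy_Schwarz_ineq2[of e "v + W \<omega>"] ne by simp
        then have "-2*c*?N \<le> -2*c*(norm v + inner e (W \<omega>))"
        proof -
          have "norm v + inner e (W \<omega>) \<le> ?N" using \<open>inner e (v + W \<omega>) \<le> ?N\<close> ev
            by (simp add: inner_add_right)
          then have "c * (norm v + inner e (W \<omega>)) \<le> c * ?N" using c0 by (rule mult_left_mono)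
          then show ?thesis by simp
        qed
        then have "norm v^2 + 2 * inner v (W \<omega>) + norm (W \<omega>)^2 - 2*c*?N + c^2
          \<le> norm v^2 + 2 * inner v (W \<omega>) + norm (W \<omega>)^2 - 2*c*(norm v + inner e (W \<omega>)) + c^2"
          by linarith
        also have "\<dots> = R \<omega>"
          by (simp add: R_def power2_diff inner_diff_left algebra_simps)
        finally show ?thesis by simp
      qed
      have Ri: "integrable M R"
      proof -
        have i1: "integrable M (\<lambda>\<omega>. (norm v - c)^2)" by simp
        have i3: "integrable M (\<lambda>\<omega>. 2 * inner (v - c *\<^sub>R e) (W \<omega>))"
          using Wi by (intro integrable_mult_right integrable_inner_right)
        show ?thesis unfolding R_def
          by (intro Bochner_Integration.integrable_add i1 i3 W2i)
      qed
      have Rint: "(\<integral>\<omega>. R \<omega> \<partial>M) = (norm v - c)^2 + (\<integral>\<omega>. norm (W \<omega>)^2 \<partial>M)"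
        unfolding R_def using W2i Wi W0
        by (simp add: integral_inner_right prob_space integrable_inner_right)
      have vc: "norm v - c \<le> max 0 (s - a * real n)"
      proof -
        have "norm v \<le> s - a" using va vpos by linarith
        then show ?thesis unfolding c_def by (simp add: algebra_simps)
      qed
      have vc2: "(norm v - c)^2 \<le> ?U" using vc False by (intro power_mono) auto
      have "?L \<le> (\<integral>\<^sup>+\<omega>. ennreal (R \<omega>) \<partial>M)"
        using pw unfolding c_def by (intro nn_integral_mono ennreal_leI) auto
      also have "\<dots> = ennreal (\<integral>\<omega>. R \<omega> \<partial>M)"
        using Ri pw by (intro nn_integral_eq_integral) (auto intro: order_trans[OF zero_le_power2])
      also have "\<dots> \<le> ennreal (?U + ?err)"
        using Rint W2 Serr vc2 by (intro ennreal_leI) linarith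
      finally show ?thesis .
    qed
  qed
qed


lemma indep_split:
  fixes Y :: "'a \<Rightarrow> 'b::topological_space" and Z :: "'a \<Rightarrow> 'b"
  assumes P: "prob_space M" and ind: "prob_space.indep_var M borel Y borel Z"
    and F: "F \<in> borel_measurable (borel \<Otimes>\<^sub>M borel)"
  shows "(\<integral>\<^sup>+\<omega>. F (Y \<omega>, Z \<omega>) \<partial>M) = (\<integral>\<^sup>+\<omega>. (\<integral>\<^sup>+\<omega>'. F (Y \<omega>, Z \<omega>') \<partial>M) \<partial>M)"
proof -
  interpret prob_space M by (rule P)
  have rvY: "Y \<in> borel_measurable M" and rvZ: "Z \<in> borel_measurable M"
    and eq: "distr M borel Y \<Otimes>\<^sub>M distr M borel Z = distr M (borel \<Otimes>\<^sub>M borel) (\<lambda>x. (Y x, Z x))"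
    using ind unfolding indep_var_distribution_eq by auto
  interpret DZ: prob_space "distr M borel Z" using rvZ by (rule prob_space_distr)
  have Fy: "(\<lambda>z. F (y, z)) \<in> borel_measurable borel" for y using F by measurable
  have "(\<integral>\<^sup>+\<omega>. F (Y \<omega>, Z \<omega>) \<partial>M) = (\<integral>\<^sup>+p. F p \<partial>distr M (borel \<Otimes>\<^sub>M borel) (\<lambda>x. (Y x, Z x)))"
    using rvY rvZ F by (subst nn_integral_distr) auto
  also have "\<dots> = (\<integral>\<^sup>+p. F p \<partial>(distr M borel Y \<Otimes>\<^sub>M distr M borel Z))" by (simp add: eq)
  also have "\<dots> = (\<integral>\<^sup>+y. (\<integral>\<^sup>+z. F (y, z) \<partial>distr M borel Z) \<partial>distr M borel Y)"
    using F by (subst DZ.nn_integral_fst[symmetric]) (auto simp: sets_pair_measure_cong)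
  also have "\<dots> = (\<integral>\<^sup>+\<omega>. (\<integral>\<^sup>+z. F (Y \<omega>, z) \<partial>distr M borel Z) \<partial>M)"
    using rvY F by (subst nn_integral_distr) (auto intro!: DZ.borel_measurable_nn_integral_fst)
  also have "\<dots> = (\<integral>\<^sup>+\<omega>. (\<integral>\<^sup>+\<omega>'. F (Y \<omega>, Z \<omega>') \<partial>M) \<partial>M)"
    using rvZ Fy by (intro nn_integral_cong) (simp add: nn_integral_distr)
  finally show ?thesis .
qed

lemma cl_rep: "closed_loop A f w x k \<omega> = closed_loop A f (\<lambda>i z. z i) x k (\<lambda>i. w i \<omega>)"
  by (induction k) auto

lemma cl_restrict: "k \<le> m \<Longrightarrow> closed_loop A f (\<lambda>i z. z i) x k z = closed_loop A f (\<lambda>i z. z i) x k (restrict z {..<m})"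
  by (induction k) auto

lemma cl_meas:
  assumes f: "f \<in> borel_measurable borel"
  shows "k \<le> m \<Longrightarrow> closed_loop A f (\<lambda>i z. z i) x k \<in> borel_measurable (PiM {..<m} (\<lambda>_. borel))"
proof (induction k)
  case 0 then show ?case by simp
next
  case (Suc k)
  have Am: "(*v) A \<in> borel_measurable borel"
    by (intro borel_measurable_continuous_onI) (rule linear_continuous_on[OF matrix_vector_mul_bounded_linear])
  have IH: "closed_loop A f (\<lambda>i z. z i) x k \<in> borel_measurable (PiM {..<m} (\<lambda>_. borel))"
    using Suc by simp
  have comp: "(\<lambda>z. z k) \<in> borel_measurable (PiM {..<m} (\<lambda>_. borel))"
    using Suc by (intro measurable_component_singleton) auto
  show ?case using IH comp
    by (simp only: closed_loop.simps) (intro borel_measurable_add measurable_compose[OF IH f] measurable_compose[OF IH Am])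
qed

lemma cl_indep:
  fixes w :: "nat \<Rightarrow> 'a \<Rightarrow> real^'n"
  assumes P: "prob_space M" and ind: "prob_space.indep_vars M (\<lambda>_. borel) w UNIV"
    and f: "f \<in> borel_measurable borel"
  shows "prob_space.indep_var M borel (closed_loop A f w x k) borel (w k)"
proof -
  interpret prob_space M by (rule P)
  define K where "K = case_bool {..<k} {k}"
  have a: "indep_vars (\<lambda>j. PiM (K j) (\<lambda>_. borel)) (\<lambda>j \<omega>. restrict (\<lambda>i. w i \<omega>) (K j)) UNIV"
    using ind by (rule indep_vars_restrict) (auto simp: K_def disjoint_family_on_def split: bool.splits)
  moreover have b: "(\<lambda>j. PiM (K j) (\<lambda>_. borel)) = case_bool (PiM {..<k} (\<lambda>_. borel)) (PiM {k} (\<lambda>_. borel))"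
    by (auto simp: K_def split: bool.splits)
  moreover have c: "(\<lambda>j \<omega>. restrict (\<lambda>i. w i \<omega>) (K j)) = case_bool (\<lambda>\<omega>. restrict (\<lambda>i. w i \<omega>) {..<k}) (\<lambda>\<omega>. restrict (\<lambda>i. w i \<omega>) {k})"
    by (auto simp: K_def split: bool.splits)
  ultimately have i2: "indep_var (PiM {..<k} (\<lambda>_. borel)) (\<lambda>\<omega>. restrict (\<lambda>i. w i \<omega>) {..<k})
       (PiM {k} (\<lambda>_. borel)) (\<lambda>\<omega>. restrict (\<lambda>i. w i \<omega>) {k})"
    unfolding indep_var_def using a b c by metis
  have G: "closed_loop A f (\<lambda>i z. z i) x k \<in> borel_measurable (PiM {..<k} (\<lambda>_. borel))"
    using f by (rule cl_meas) simp
  have H: "(\<lambda>z. z k) \<in> borel_measurable (PiM {k} (\<lambda>_. borel :: (real^'n) measure))"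
    by (intro measurable_component_singleton) auto
  have "indep_var borel (closed_loop A f (\<lambda>i z. z i) x k \<circ> (\<lambda>\<omega>. restrict (\<lambda>i. w i \<omega>) {..<k}))
      borel ((\<lambda>z. z k) \<circ> (\<lambda>\<omega>. restrict (\<lambda>i. w i \<omega>) {k}))"
    by (rule indep_var_compose[OF i2 G H])
  moreover have "closed_loop A f (\<lambda>i z. z i) x k \<circ> (\<lambda>\<omega>. restrict (\<lambda>i. w i \<omega>) {..<k}) = closed_loop A f w x k"
    by (rule ext) (simp add: cl_rep[of A f w x k] cl_restrict[of k k, symmetric])
  moreover have "(\<lambda>z. z k) \<circ> (\<lambda>\<omega>. restrict (\<lambda>i. w i \<omega>) {k}) = w k"
    by (rule ext) simp
  ultimately show ?thesis by simp
qed



lemma inv_sq_aux: "(\<Sum>i<Suc t. 1 / (real (Suc i))^2) \<le> 2 - 1 / (real t + 1)"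
proof (induction t)
  case 0 then show ?case by simp
next
  case (Suc t)
  have e: "1 / (real t + 1) - 1 / (real (Suc t) + 1) = 1 / ((real t + 1) * (real t + 2))"
    by (simp add: field_simps)
  have le: "(real t + 1) * (real t + 2) \<le> (real t + 2)^2" by (simp add: power2_eq_square algebra_simps)
  have "1 / (real t + 2)^2 \<le> 1 / ((real t + 1) * (real t + 2))"
    by (rule divide_left_mono[OF le]) auto
  then have "1 / (real (Suc (Suc t)))^2 \<le> 1 / (real t + 1) - 1 / (real (Suc t) + 1)"
    using e by (simp add: add.commute)
  then show ?case using Suc by simp
qed

lemma inv_sq_sum: "(\<Sum>i<t. 1 / (real (t - i))^2) \<le> 2"
proof -
  have "(\<Sum>i<t. 1 / (real (t - i))^2) = (\<Sum>i<t. (\<lambda>j. 1 / (real (Suc j))^2) (t - Suc i))"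
    by (intro sum.cong) (auto simp: Suc_diff_Suc)
  also have "\<dots> = (\<Sum>i<t. 1 / (real (Suc i))^2)" by (rule sum.nat_diff_reindex)
  also have "\<dots> \<le> 2"
  proof (cases t)
    case 0 then show ?thesis by simp
  next
    case (Suc t')
    have "1 / (real t' + 1) \<ge> 0" by simp
    then show ?thesis using inv_sq_aux[of t'] unfolding Suc by linarith
  qed
  finally show ?thesis .
qed

theorem lemma4:
  fixes M :: "'a measure"
    and A :: "real^'n^'n"
    and w :: "nat \<Rightarrow> 'a \<Rightarrow> real^'n"
    and Q :: "nat \<Rightarrow> real^'n^'n"
    and C4 :: real
  assumes "prob_space M"
    and "orthogonal_matrix A"
    and "\<And>t. w t \<in> borel_measurable M"
    and "prob_space.indep_vars M (\<lambda>_. borel) w UNIV"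
    and "\<And>t. integrable M (w t)"
    and "\<And>t. (\<integral>\<omega>. w t \<omega> \<partial>M) = 0"
    and "\<And>t. integrable M (\<lambda>\<omega>. \<chi> i j. w t \<omega> $ i * w t \<omega> $ j)"
    and "\<And>t. (\<integral>\<omega>. (\<chi> i j. w t \<omega> $ i * w t \<omega> $ j) \<partial>M) = Q t"
    and "C4 > 0"
    and "\<And>t. integrable M (\<lambda>\<omega>. norm (w t \<omega>) ^ 4)"
    and "\<And>t. (\<integral>\<omega>. norm (w t \<omega>) ^ 4 \<partial>M) \<le> C4"
  shows "\<exists>r>0. \<exists>f :: real^'n \<Rightarrow> real^'n.
           f \<in> borel_measurable borel \<and> (\<forall>y. norm (f y) \<le> r) \<and>
           (\<forall>x. (SUP t. \<integral>\<^sup>+ \<omega>. ennreal (norm (closed_loop A f w x t \<omega>) ^ 2) \<partial>M) < \<infinity>)"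
proof -
  interpret prob_space M by (rule assms(1))
  define S where "S = 1 + C4"
  define a where "a = 4 * S"
  have S1: "S \<ge> 1" using assms(9) by (simp add: S_def)
  have a0: "a > 0" using S1 by (simp add: a_def)
  define f where "f = ctrl a A"
  define K0 where "K0 = 16*C4/a^2 + 9*(1+C4)"
  define K1 where "K1 = 4*(1+C4)/a^2"
  have K1le: "K1 \<le> 1/4"
  proof -
    have h: "1 + C4 = S" by (simp add: S_def)
    have "K1 = 4*S/(4*S)^2" by (simp only: K1_def a_def h)
    also have "\<dots> = 1 / (4 * S)" using S1 by (simp add: power2_eq_square field_simps)
    finally have "K1 = 1 / (4 * S)" .
    also have "\<dots> \<le> 1/4" using S1 by (simp add: field_simps)
    finally show ?thesis .
  qed
  have K1nn: "K1 \<ge> 0" using assms(9) by (simp add: K1_def)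
  have K0nn: "K0 \<ge> 0" using assms(9) by (simp add: K0_def)
  have Keq: "\<And>s. K0 + K1 * s^2 = 16*C4/a^2 + 9*(1+C4) + 4*(1+C4)/a^2 * s^2"
    by (simp add: K0_def K1_def)
  have main: "(SUP t. \<integral>\<^sup>+ \<omega>. ennreal (norm (closed_loop A f w x t \<omega>) ^ 2) \<partial>M) < \<infinity>" for x
  proof -
    define y where "y k = closed_loop A f w x k" for k
    define g where "g v = A *v v + f v" for v
    have ysuc: "y (Suc k) \<omega> = g (y k \<omega>) + w k \<omega>" for k \<omega> by (simp add: y_def g_def)
    have gnorm: "norm (g v) \<le> max 0 (norm v - a)" for v
      using g_norm[OF assms(2) a0] by (simp add: g_def f_def)
    have gle: "norm (g v) \<le> norm v" for v using gnorm[of v] a0 norm_ge_zero[of v] by (auto simp: max_def split: if_splits)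
    have gm[measurable]: "g \<in> borel_measurable borel" unfolding g_def f_def by measurable
    have ind: "indep_var borel (y k) borel (w k)" for k
      using cl_indep[OF assms(1) assms(4), of f A x k] ctrl_meas by (simp add: y_def f_def)
    have ym[measurable]: "y k \<in> borel_measurable M" for k using ind[of k] by (rule indep_var_rv1)
    define m where "m k = (\<integral>\<^sup>+\<omega>. ennreal (norm (y k \<omega>)^2) \<partial>M)" for k
    have step: "(\<integral>\<^sup>+\<omega>. ennreal ((max 0 (norm (y (Suc k) \<omega>) - a*(real n - 1)))^2) \<partial>M)
        \<le> (\<integral>\<^sup>+\<omega>. ennreal ((max 0 (norm (y k \<omega>) - a * real n))^2) \<partial>M) + ennreal ((K0 + K1*B)/(real n)^2)"
      if n1: "n \<ge> 1" and B0: "B \<ge> 0" and mk: "m k \<le> ennreal B" for k n B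
    proof -
      define F where "F p = ennreal ((max 0 (norm (g (fst p) + snd p) - a*(real n - 1)))^2)"
        for p :: "(real^'n) \<times> (real^'n)"
      have Fm: "F \<in> borel_measurable (borel \<Otimes>\<^sub>M borel)" unfolding F_def by measurable
      have "(\<integral>\<^sup>+\<omega>. ennreal ((max 0 (norm (y (Suc k) \<omega>) - a*(real n - 1)))^2) \<partial>M)
          = (\<integral>\<^sup>+\<omega>. F (y k \<omega>, w k \<omega>) \<partial>M)" by (simp add: F_def ysuc)
      also have "\<dots> = (\<integral>\<^sup>+\<omega>. (\<integral>\<^sup>+\<omega>'. F (y k \<omega>, w k \<omega>') \<partial>M) \<partial>M)"
        by (rule indep_split[OF assms(1) ind Fm])
      also have "\<dots> \<le> (\<integral>\<^sup>+\<omega>. ennreal ((max 0 (norm (y k \<omega>) - a * real n))^2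
                     + (K0/(real n)^2 + (K1/(real n)^2) * norm (y k \<omega>)^2)) \<partial>M)"
      proof (intro nn_integral_mono)
        fix \<omega>
        have "(\<integral>\<^sup>+\<omega>'. F (y k \<omega>, w k \<omega>') \<partial>M)
          \<le> ennreal ((max 0 (norm (y k \<omega>) - a * real n))^2 + (16*C4/a^2 + 9*(1+C4) + 4*(1+C4)/a^2 * (norm (y k \<omega>))^2) / (real n)^2)"
          unfolding F_def fst_conv snd_conv
          by (rule step_bound[OF assms(1) assms(3) assms(5) assms(6) assms(10) assms(11) assms(9) a0 n1 gle gnorm])
        also have "(16*C4/a^2 + 9*(1+C4) + 4*(1+C4)/a^2 * (norm (y k \<omega>))^2) / (real n)^2
           = K0/(real n)^2 + (K1/(real n)^2) * norm (y k \<omega>)^2"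
          unfolding Keq[symmetric] by (simp add: add_divide_distrib)
        finally show "(\<integral>\<^sup>+\<omega>'. F (y k \<omega>, w k \<omega>') \<partial>M) \<le> ennreal ((max 0 (norm (y k \<omega>) - a * real n))^2
                     + (K0/(real n)^2 + (K1/(real n)^2) * norm (y k \<omega>)^2))" .
      qed
      also have "\<dots> = (\<integral>\<^sup>+\<omega>. ennreal ((max 0 (norm (y k \<omega>) - a * real n))^2) \<partial>M)
                     + (\<integral>\<^sup>+\<omega>. ennreal (K0/(real n)^2) + ennreal (K1/(real n)^2) * ennreal (norm (y k \<omega>)^2) \<partial>M)"
      proof -
        have pt: "ennreal ((max 0 (norm (y k \<omega>) - a * real n))^2 + (K0/(real n)^2 + (K1/(real n)^2) * norm (y k \<omega>)^2))
           = ennreal ((max 0 (norm (y k \<omega>) - a * real n))^2) + (ennreal (K0/(real n)^2) + ennreal (K1/(real n)^2) * ennreal (norm (y k \<omega>)^2))" for \<omega>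
        proof -
          have h1: "K0/(real n)^2 \<ge> 0" "K1/(real n)^2 \<ge> 0" using K0nn K1nn by auto
          have h2: "(K1/(real n)^2) * norm (y k \<omega>)^2 \<ge> 0" using h1(2) by (rule mult_nonneg_nonneg) simp
          have h3: "ennreal ((K1/(real n)^2) * norm (y k \<omega>)^2) = ennreal (K1/(real n)^2) * ennreal (norm (y k \<omega>)^2)"
            by (rule ennreal_mult[OF h1(2)]) simp
          have h4: "ennreal (K0/(real n)^2 + (K1/(real n)^2) * norm (y k \<omega>)^2) = ennreal (K0/(real n)^2) + ennreal ((K1/(real n)^2) * norm (y k \<omega>)^2)"
            by (rule ennreal_plus[OF h1(1) h2])
          have h5: "ennreal ((max 0 (norm (y k \<omega>) - a * real n))^2 + (K0/(real n)^2 + (K1/(real n)^2) * norm (y k \<omega>)^2))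
             = ennreal ((max 0 (norm (y k \<omega>) - a * real n))^2) + ennreal (K0/(real n)^2 + (K1/(real n)^2) * norm (y k \<omega>)^2)"
            by (rule ennreal_plus) (use h1 h2 in auto)
          show ?thesis unfolding h5 h4 h3 ..
        qed
        show ?thesis unfolding pt by (rule nn_integral_add) auto
      qed
      also have "(\<integral>\<^sup>+\<omega>. ennreal (K0/(real n)^2) + ennreal (K1/(real n)^2) * ennreal (norm (y k \<omega>)^2) \<partial>M)
          = ennreal (K0/(real n)^2) + ennreal (K1/(real n)^2) * m k"
        unfolding m_def by (simp add: nn_integral_add nn_integral_cmult emeasure_space_1)
      also have "\<dots> \<le> ennreal (K0/(real n)^2) + ennreal (K1/(real n)^2) * ennreal B"
        using mk by (intro add_left_mono mult_left_mono) auto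
      also have "\<dots> = ennreal ((K0 + K1*B)/(real n)^2)"
      proof -
        have q1: "ennreal (K1/(real n)^2) * ennreal B = ennreal (K1/(real n)^2 * B)"
          by (rule ennreal_mult[symmetric]) (use K1nn B0 in auto)
        have q2: "(K0 + K1*B)/(real n)^2 = K0/(real n)^2 + K1/(real n)^2 * B" by (simp add: add_divide_distrib)
        have q3: "ennreal (K0/(real n)^2 + K1/(real n)^2 * B) = ennreal (K0/(real n)^2) + ennreal (K1/(real n)^2 * B)"
          by (rule ennreal_plus) (use K0nn K1nn B0 in auto)
        show ?thesis unfolding q1 q2 q3 ..
      qed
      finally show ?thesis by (simp add: add_mono)
    qed
    define B where "B = 2 * (norm x^2 + 2*K0)"
    have B0: "B \<ge> 0" using K0nn by (simp add: B_def)
    have bound: "m t \<le> ennreal B" for t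
    proof (induction t rule: less_induct)
      case (less t)
      define J where "J j = (\<integral>\<^sup>+\<omega>. ennreal ((max 0 (norm (y j \<omega>) - a * real (t - j)))^2) \<partial>M)" for j
      have tele: "j \<le> t \<Longrightarrow> J j \<le> J 0 + ennreal (\<Sum>i<j. (K0 + K1*B)/(real (t-i))^2)" for j
      proof (induction j)
        case 0 then show ?case by simp
      next
        case (Suc j)
        then have jt: "j < t" by simp
        have n1: "t - j \<ge> 1" using jt by simp
        have e1: "real (t - Suc j) = real (t - j) - 1" using jt by simp
        have "J (Suc j) \<le> J j + ennreal ((K0 + K1*B)/(real (t - j))^2)"
          unfolding J_def e1 by (rule step[OF n1 B0 less[OF jt]])
        also have "\<dots> \<le> J 0 + ennreal (\<Sum>i<j. (K0 + K1*B)/(real (t-i))^2) + ennreal ((K0 + K1*B)/(real (t - j))^2)"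
          using Suc jt by (intro add_right_mono) simp
        also have "\<dots> = J 0 + ennreal (\<Sum>i<Suc j. (K0 + K1*B)/(real (t-i))^2)"
          using K0nn K1nn B0 by (simp add: add.assoc sum_nonneg)
        finally show ?case .
      qed
      have Jt: "J t = m t" by (simp add: J_def m_def)
      have J0: "J 0 \<le> ennreal (norm x^2)"
      proof -
        have "J 0 = ennreal ((max 0 (norm x - a * real t))^2)"
          by (simp add: J_def y_def emeasure_space_1)
        also have "\<dots> \<le> ennreal (norm x^2)"
          using a0 by (intro ennreal_leI power_mono) auto
        finally show ?thesis .
      qed
      have sumle: "(\<Sum>i<t. (K0 + K1*B)/(real (t-i))^2) \<le> 2 * (K0 + K1*B)"
      proof -
        have "(\<Sum>i<t. (K0 + K1*B)/(real (t-i))^2) = (K0 + K1*B) * (\<Sum>i<t. 1/(real (t-i))^2)"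
          by (simp add: sum_distrib_left)
        also have "\<dots> \<le> (K0 + K1*B) * 2"
          using K0nn K1nn B0 inv_sq_sum[of t] by (intro mult_left_mono) auto
        finally show ?thesis by simp
      qed
      have "m t \<le> J 0 + ennreal (\<Sum>i<t. (K0 + K1*B)/(real (t-i))^2)"
        using tele[of t] Jt by simp
      also have "\<dots> \<le> ennreal (norm x^2) + ennreal (2 * (K0 + K1*B))"
        by (intro add_mono J0 ennreal_leI sumle)
      also have "\<dots> = ennreal (norm x^2 + 2 * (K0 + K1*B))"
        using K0nn K1nn B0 by simp
      also have "\<dots> \<le> ennreal B"
      proof (intro ennreal_leI)
        have "K1 * B \<le> (1/4) * B" using K1le B0 by (rule mult_right_mono)
        then show "norm x^2 + 2 * (K0 + K1*B) \<le> B" by (simp add: B_def)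
      qed
      finally show ?case .
    qed
    have "(SUP t. m t) \<le> ennreal B" by (intro SUP_least bound)
    also have "\<dots> < \<infinity>" by simp
    finally show ?thesis by (simp add: m_def y_def)
  qed
  show ?thesis
    using a0 ctrl_meas[of a A] ctrl_norm[OF assms(2) a0] main unfolding f_def by blast
qed


end
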